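(* If $n\ge 3t+1$, then in every execution of COOL there is a value $\boldsymbol M\ne\phi$ such that, at the end of Phase 3, the updated message $\boldsymbol w^{(i)}$ of every honest processor $i$ belongs to $\{\boldsymbol M,\phi\}$; that is, at most one group of honest processors holds a common non-empty updated message, and all other honest processors hold the empty updated message $\phi$.
   Context: Setting. $n$ processors indexed by $[1:n]$, pairwise joined by reliable private synchronous channels; recipients know senders. At most $t$ processors are dishonest, controlled by a Byzantine adversary of unbounded computational power knowing all inputs, who may make them deviate arbitrarily (missing values are replaced by a fixed default); the others are honest. Processor $i$ holds an $\ell$-bit initial message $\boldsymbol w_i$. $\phi$ is a default value different from every $\ell$-bit message. Logarithms are base 2. Code. $k=\lfloor t/5\rfloor+1$, $c=\lceil \max\{\ell,(t/5+1)\log(n+1)\}/k\rceil$. Messages are zero-padded to $kc$ bits and viewed in $GF(2^c)^k$. Integers in $[1:n]$ are identified with distinct nonzero elements of $GF(2^c)$; $\boldsymbol h_i\in GF(2^c)^k$ has entries $h_{i,j}=\prod_{p\in[1:k],\,p\ne j}\frac{i-p}{j-p}$ (field arithmetic). COOL (honest processor $i$). Initialization: updated message $\boldsymbol w^{(i)}:=\boldsymbol w_i$, $y^{(i)}_j:=\boldsymbol h_j^{\mathsf T}\boldsymbol w_i$ for $j\in[1:n]$, $u_i(i):=1$. Phase 1. (a) Send $(y^{(i)}_j,y^{(i)}_i)$ to each $j\ne i$. (b) For $j\ne i$, link indicator $u_i(j):=1$ if the pair received from $j$ equals $(y^{(i)}_i,y^{(i)}_j)$, else $0$. Success indicator $s_i:=1$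 if $\sum_{j=1}^n u_i(j)\ge n-t$; otherwise $s_i:=0$ and $\boldsymbol w^{(i)}:=\phi$. (c) Send $s_i$ to all; each processor records the indicator received from each $j$ (own for itself) and forms $\mathcal S_1=\{j:s_j=1\}$, $\mathcal S_0=\{j:s_j=0\}$ (views may differ). Phase 2. If $s_i=1$: set $u_i(j):=0$ for all $j\in\mathcal S_0$; if now $\sum_j u_i(j)<n-t$, set $s_i:=0$, $\boldsymbol w^{(i)}:=\phi$, and send $s_i=0$ to all. Everyone overwrites recorded indicators with newly received ones and recomputes $\mathcal S_0,\mathcal S_1$. Phase 3. Repeat Phase 2 once more. Vote $v_i:=1$ if the recorded indicators satisfy $\sum_j s_j\ge 2t+1$, else $0$. Run on the votes a deterministic error-free binary Byzantine agreement protocol for $t<n/3$. If the decision is $0$: set $\boldsymbol w^{(i)}:=\phi$, output $\phi$, stop. Phase 4 (decision 1). If $s_i=0$: replace $y^{(i)}_i$ by the most frequent first component of the Phase-1 pairs received from $j\in\mathcal S_1$; send it to each $j\in\mathcal S_0\setminus\{i\}$; decode from $z_1,\dots,z_n$ ($z_i=y^{(i)}_i$; Phase-4 values for $j\in\mathcal S_0$; second components of Phase-1 pairs for $j\in\mathcal S_1$) a message $\boldsymbol x$ with $\boldsymbol h_j^{\mathsf T}\boldsymbol x=z_j$ for at least $n-t$ indices, and set $\boldsymbol w^{(i)}:=\boldsymbol x$. If $s_i=1$ keep $\boldsymbol w^{(i)}$. Output $\boldsymbol w^{(i)}$. *)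

theory Defs
  imports Complex_Main
begin

text \<open>Parameters of the code.  Processors are indexed by 1..n; field elements of
  GF(2^c) are modelled by an arbitrary finite field type of cardinality 2^c.\<close>

definition cool_k :: "nat \<Rightarrow> nat" where
  "cool_k t = t div 5 + 1"

definition cool_c :: "nat \<Rightarrow> nat \<Rightarrow> nat \<Rightarrow> nat" where
  "cool_c n t l = nat \<lceil>max (real l) ((real t / 5 + 1) * log 2 (real (n + 1))) / real (cool_k t)\<rceil>"

text \<open>Entries h_{i,j} of the coding vectors; pt identifies integers with field elements.\<close>
definition hcoef :: "(nat \<Rightarrow> 'f::field) \<Rightarrow> nat \<Rightarrow> nat \<Rightarrow> nat \<Rightarrow> 'f" where
  "hcoef pt k i j = (\<Prod>p\<in>{1..k} - {j}. (pt i - pt p) / (pt j - pt p))"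

text \<open>Zero-padding an l-bit message to k*c bits and viewing it in GF(2^c)^k,
  via a bijection beta between c-bit strings and field elements (q-th coordinate, q in 1..k).\<close>
definition encode :: "(bool list \<Rightarrow> 'f) \<Rightarrow> nat \<Rightarrow> nat \<Rightarrow> nat \<Rightarrow> bool list \<Rightarrow> nat \<Rightarrow> 'f" where
  "encode beta k c l w q = beta (take c (drop ((q - 1) * c) (w @ replicate (k * c - l) False)))"

definition ycode :: "(nat \<Rightarrow> 'f::field) \<Rightarrow> (bool list \<Rightarrow> 'f) \<Rightarrow> nat \<Rightarrow> nat \<Rightarrow> nat \<Rightarrow> bool list \<Rightarrow> nat \<Rightarrow> 'f" where
  "ycode pt beta k c l w j = (\<Sum>q=1..k. hcoef pt k j q * encode beta k c l w q)"

text \<open>Y: coding function (message, index) to symbol; D: dishonest set; win: initial messages;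
  adv1 j i: Phase-1 pair sent by dishonest j to i; advS1 j i: Phase-1(c) indicator sent by
  dishonest j to i; adversarial values in Phases 2/3 are optional (None = nothing sent).\<close>

definition p1_pair :: "(bool list \<Rightarrow> nat \<Rightarrow> 'f) \<Rightarrow> nat set \<Rightarrow> (nat \<Rightarrow> bool list)
    \<Rightarrow> (nat \<Rightarrow> nat \<Rightarrow> 'f \<times> 'f) \<Rightarrow> nat \<Rightarrow> nat \<Rightarrow> 'f \<times> 'f" where
  "p1_pair Y D win adv1 j i = (if j \<in> D then adv1 j i else (Y (win j) i, Y (win j) j))"

definition link1 :: "(bool list \<Rightarrow> nat \<Rightarrow> 'f) \<Rightarrow> nat set \<Rightarrow> (nat \<Rightarrow> bool list)
    \<Rightarrow> (nat \<Rightarrow> nat \<Rightarrow> 'f \<times> 'f) \<Rightarrow> nat \<Rightarrow> nat \<Rightarrow> bool" where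
  "link1 Y D win adv1 i j = (j = i \<or> p1_pair Y D win adv1 j i = (Y (win i) i, Y (win i) j))"

definition succ1 :: "nat \<Rightarrow> nat \<Rightarrow> (bool list \<Rightarrow> nat \<Rightarrow> 'f) \<Rightarrow> nat set \<Rightarrow> (nat \<Rightarrow> bool list)
    \<Rightarrow> (nat \<Rightarrow> nat \<Rightarrow> 'f \<times> 'f) \<Rightarrow> nat \<Rightarrow> bool" where
  "succ1 n t Y D win adv1 i = (n - t \<le> card {j \<in> {1..n}. link1 Y D win adv1 i j})"

definition rec1 :: "nat \<Rightarrow> nat \<Rightarrow> (bool list \<Rightarrow> nat \<Rightarrow> 'f) \<Rightarrow> nat set \<Rightarrow> (nat \<Rightarrow> bool list)
    \<Rightarrow> (nat \<Rightarrow> nat \<Rightarrow> 'f \<times> 'f) \<Rightarrow> (nat \<Rightarrow> nat \<Rightarrow> bool) \<Rightarrow> nat \<Rightarrow> nat \<Rightarrow> bool" where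
  "rec1 n t Y D win adv1 advS1 i j =
     (if j = i then succ1 n t Y D win adv1 i
      else if j \<in> D then advS1 j i else succ1 n t Y D win adv1 j)"

type_synonym cool_state = "(nat \<Rightarrow> bool) \<times> (nat \<Rightarrow> nat \<Rightarrow> bool) \<times> (nat \<Rightarrow> nat \<Rightarrow> bool)"
  (* success indicators s, link indicators u, recorded indicators R (R i j = view of i about j) *)

text \<open>One execution of Phase 2 (honest processors follow the protocol; honest j sends 0
  exactly when it switches its indicator to 0; advS j i is what dishonest j sends to i).\<close>
definition phase2_step :: "nat \<Rightarrow> nat \<Rightarrow> nat set \<Rightarrow> (nat \<Rightarrow> nat \<Rightarrow> bool option)
    \<Rightarrow> cool_state \<Rightarrow> cool_state" where
  "phase2_step n t D advS st =
    (case st of (s, u, R) \<Rightarrow>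
      let u' = (\<lambda>i j. if s i then u i j \<and> R i j else u i j);
          s' = (\<lambda>i. s i \<and> n - t \<le> card {j \<in> {1..n}. u' i j});
          msg = (\<lambda>j i. if j \<in> D then advS j i
                       else if s j \<and> \<not> s' j then Some False else None);
          R' = (\<lambda>i j. if j = i then s' i
                      else (case msg j i of Some b \<Rightarrow> b | None \<Rightarrow> R i j))
      in (s', u', R'))"

definition state_phase1 where
  "state_phase1 n t Y D win adv1 advS1 =
     (succ1 n t Y D win adv1, link1 Y D win adv1, rec1 n t Y D win adv1 advS1)"

text \<open>Updated message w^(i) at the end of Phase 3 (None = phi). The decision of the
  binary Byzantine agreement is d; decision 0 sets all updated messages to phi.\<close>
definition cool_updated_msg ::
  "nat \<Rightarrow> nat \<Rightarrow> (bool list \<Rightarrow> nat \<Rightarrow> 'f) \<Rightarrow> nat set \<Rightarrow> (nat \<Rightarrow> bool list)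
   \<Rightarrow> (nat \<Rightarrow> nat \<Rightarrow> 'f \<times> 'f) \<Rightarrow> (nat \<Rightarrow> nat \<Rightarrow> bool)
   \<Rightarrow> (nat \<Rightarrow> nat \<Rightarrow> bool option) \<Rightarrow> (nat \<Rightarrow> nat \<Rightarrow> bool option) \<Rightarrow> bool
   \<Rightarrow> nat \<Rightarrow> bool list option" where
  "cool_updated_msg n t Y D win adv1 advS1 advS2 advS3 d i =
     (let st = phase2_step n t D advS3 (phase2_step n t D advS2 (state_phase1 n t Y D win adv1 advS1))
      in if d \<and> fst st i then Some (win i) else None)"

end

theory Submission
  imports Defs "HOL-Computational_Algebra.Polynomial"
begin


lemma lagr_eval:
  fixes pt :: "nat \<Rightarrow> 'f::field"
  assumes inj: "inj_on pt {1..k}" and q: "q \<in> {1..k}" and q': "q' \<in> {1..k}"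
  shows "(\<Prod>p\<in>{1..k} - {q}. (pt q' - pt p) / (pt q - pt p)) = (if q' = q then 1 else 0)"
proof (cases "q' = q")
  case True
  have "\<And>p. p \<in> {1..k} - {q} \<Longrightarrow> pt q - pt p \<noteq> 0"
    using inj q by (auto dest: inj_onD)
  then show ?thesis using True by (auto intro!: prod.neutral)
next
  case False
  have "q' \<in> {1..k} - {q}" using False q' by auto
  then have "(\<Prod>p\<in>{1..k} - {q}. (pt q' - pt p) / (pt q - pt p)) = 0"
    by (intro prod_zero) (auto intro!: bexI[of _ q'])
  then show ?thesis using False by simp
qed

lemma lagr_roots:
  fixes pt :: "nat \<Rightarrow> 'f::field" and a b :: "nat \<Rightarrow> 'f"
  assumes inj: "inj_on pt {1..k}" and ex: "\<exists>q\<in>{1..k}. a q \<noteq> b q"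
  shows "card {x. (\<Sum>q\<in>{1..k}. (\<Prod>p\<in>{1..k} - {q}. (x - pt p) / (pt q - pt p)) * a q)
              = (\<Sum>q\<in>{1..k}. (\<Prod>p\<in>{1..k} - {q}. (x - pt p) / (pt q - pt p)) * b q)} \<le> k - 1"
proof -
  define P where "P = (\<Sum>q\<in>{1..k}. smult (a q - b q)
      (\<Prod>p\<in>{1..k} - {q}. smult (1 / (pt q - pt p)) [:- pt p, 1:]))"
  have evP: "poly P x = (\<Sum>q\<in>{1..k}. (\<Prod>p\<in>{1..k} - {q}. (x - pt p) / (pt q - pt p)) * a q)
              - (\<Sum>q\<in>{1..k}. (\<Prod>p\<in>{1..k} - {q}. (x - pt p) / (pt q - pt p)) * b q)" for x
  proof -
    have pp: "poly (\<Prod>p\<in>{1..k} - {q}. smult (1 / (pt q - pt p)) [:- pt p, 1:]) x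
       = (\<Prod>p\<in>{1..k} - {q}. (x - pt p) / (pt q - pt p))" for q
      unfolding poly_prod by (intro prod.cong refl) (simp add: diff_divide_distrib)
    show ?thesis
      unfolding P_def poly_sum sum_subtractf[symmetric]
      by (intro sum.cong refl) (simp only: poly_smult pp algebra_simps)
  qed
  have degP: "degree P \<le> k - 1"
    unfolding P_def
  proof (intro degree_sum_le)
    fix q assume q: "q \<in> {1..k}"
    have "degree (\<Prod>p\<in>{1..k} - {q}. smult (1 / (pt q - pt p)) [:- pt p, 1:])
         \<le> sum (degree \<circ> (\<lambda>p. smult (1 / (pt q - pt p)) [:- pt p, 1:])) ({1..k} - {q})"
      by (rule degree_prod_sum_le) simp
    also have "\<dots> \<le> sum (\<lambda>_. 1) ({1..k} - {q})"
      by (intro sum_mono) (simp add: degree_smult_le)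
    also have "\<dots> = k - 1" using q by simp
    finally show "degree (smult (a q - b q) (\<Prod>p\<in>{1..k} - {q}. smult (1 / (pt q - pt p)) [:- pt p, 1:])) \<le> k - 1"
      using degree_smult_le order_trans by blast
  qed simp
  obtain q' where q': "q' \<in> {1..k}" "a q' \<noteq> b q'" using ex by blast
  have "poly P (pt q') = a q' - b q'"
  proof -
    have "poly P (pt q') = (\<Sum>q\<in>{1..k}. if q = q' then a q else 0)
              - (\<Sum>q\<in>{1..k}. if q = q' then b q else 0)"
      unfolding evP using lagr_eval[OF inj _ q'(1)] by (intro arg_cong2[where f="(-)"] sum.cong) auto
    also have "\<dots> = a q' - b q'" using q'(1) by (simp add: sum.delta')
    finally show ?thesis .
  qed
  then have "P \<noteq> 0" using q' by auto
  then have "card {x. poly P x = 0} \<le> k - 1" using card_poly_roots_bound degP order_trans by blast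
  moreover have "{x. poly P x = 0} = {x. (\<Sum>q\<in>{1..k}. (\<Prod>p\<in>{1..k} - {q}. (x - pt p) / (pt q - pt p)) * a q)
              = (\<Sum>q\<in>{1..k}. (\<Prod>p\<in>{1..k} - {q}. (x - pt p) / (pt q - pt p)) * b q)}"
    unfolding evP by simp
  ultimately show ?thesis by simp
qed

lemma enc_inj:
  assumes bij: "bij_betw beta {xs. length xs = c} UNIV"
    and lu: "length u = l" and lv: "length v = l" and lk: "l \<le> k * c"
    and eq: "\<forall>q\<in>{1..k}. encode beta k c l u q = encode beta k c l v q"
  shows "u = v"
proof -
  define U where "U = u @ replicate (k * c - l) False"
  define V where "V = v @ replicate (k * c - l) False"
  have lU: "length U = k * c" and lV: "length V = k * c" using lu lv lk by (auto simp: U_def V_def)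
  have inj: "inj_on beta {xs. length xs = c}" using bij bij_betw_imp_inj_on by blast
  have chunk: "take c (drop ((q - 1) * c) U) = take c (drop ((q - 1) * c) V)" if q: "q \<in> {1..k}" for q
  proof -
    have "(q - 1) * c + c \<le> k * c" using q
      by (metis Suc_le_eq Suc_pred' atLeastAtMost_iff le_refl less_one linorder_not_le mult_Suc mult_le_mono1 add.commute)
    then have "length (take c (drop ((q - 1) * c) U)) = c" "length (take c (drop ((q - 1) * c) V)) = c"
      using lU lV by auto
    moreover have "beta (take c (drop ((q - 1) * c) U)) = beta (take c (drop ((q - 1) * c) V))"
      using eq q by (simp add: encode_def U_def V_def)
    ultimately show ?thesis using inj by (auto dest: inj_onD)
  qed
  have "U = V"
  proof (rule nth_equalityI)
    show "length U = length V" using lU lV by simp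
    fix p assume p: "p < length U"
    then have pk: "p < k * c" using lU by simp
    then have cpos: "c > 0" by (cases c) auto
    define q where "q = p div c + 1"
    have qk: "q \<in> {1..k}" using pk cpos unfolding q_def
      by (simp add: less_mult_imp_div_less Suc_leI)
    have pm: "p mod c < c" using cpos by simp
    have pe: "(q - 1) * c + p mod c = p" unfolding q_def by simp
    have "U ! p = take c (drop ((q - 1) * c) U) ! (p mod c)"
    proof -
      have "(q - 1) * c \<le> length U" using pe pk lU by linarith
      then show ?thesis using pm pe by simp
    qed
    also have "\<dots> = take c (drop ((q - 1) * c) V) ! (p mod c)" using chunk[OF qk] by simp
    also have "\<dots> = V ! p"
    proof -
      have "(q - 1) * c \<le> length V" using pe pk lV by linarith
      then show ?thesis using pm pe by simp
    qed
    finally show "U ! p = V ! p" .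
  qed
  then have "take l U = take l V" by simp
  then show ?thesis using lu lv by (simp add: U_def V_def)
qed

lemma ycode_agree:
  fixes pt :: "nat \<Rightarrow> 'f::{field,finite}"
  assumes bij: "bij_betw beta {xs. length xs = c} UNIV"
    and lu: "length u = l" and lv: "length v = l" and lk: "l \<le> k * c"
    and inj: "inj_on pt {1..n}" and kn: "k \<le> n" and uv: "u \<noteq> v"
  shows "card {e \<in> {1..n}. ycode pt beta k c l u e = ycode pt beta k c l v e} \<le> k - 1"
proof -
  let ?S = "{e \<in> {1..n}. ycode pt beta k c l u e = ycode pt beta k c l v e}"
  let ?a = "encode beta k c l u" and ?b = "encode beta k c l v"
  have ex: "\<exists>q\<in>{1..k}. ?a q \<noteq> ?b q" using enc_inj[OF bij lu lv lk] uv by blast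
  have injk: "inj_on pt {1..k}" using inj kn by (auto intro: inj_on_subset)
  let ?R = "{x. (\<Sum>q\<in>{1..k}. (\<Prod>p\<in>{1..k} - {q}. (x - pt p) / (pt q - pt p)) * ?a q)
              = (\<Sum>q\<in>{1..k}. (\<Prod>p\<in>{1..k} - {q}. (x - pt p) / (pt q - pt p)) * ?b q)}"
  have "pt ` ?S \<subseteq> ?R" by (auto simp: ycode_def hcoef_def)
  then have "card (pt ` ?S) \<le> card ?R" by (intro card_mono) auto
  moreover have "card (pt ` ?S) = card ?S" by (intro card_image inj_on_subset[OF inj]) auto
  ultimately show ?thesis using lagr_roots[OF injk ex] by simp
qed



lemma card3_bound:
  assumes "finite A" "finite B" "finite C"
  shows "card A + card B + card C \<le> card (A \<union> B \<union> C) + card (A \<inter> B) + card (A \<inter> C) + card (B \<inter> C)"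
proof -
  have 1: "card (A \<union> B) + card (A \<inter> B) = card A + card B" using assms card_Un_Int by metis
  have 2: "card (A \<union> B \<union> C) + card ((A \<union> B) \<inter> C) = card (A \<union> B) + card C"
    using assms card_Un_Int[of "A \<union> B" C] by simp
  have "(A \<union> B) \<inter> C = (A \<inter> C) \<union> (B \<inter> C)" by blast
  then have 3: "card ((A \<union> B) \<inter> C) \<le> card (A \<inter> C) + card (B \<inter> C)" by (metis card_Un_le)
  show ?thesis using 1 2 3 by linarith
qed

locale combi =
  fixes H S1 S2 S3 :: "nat set" and L :: "nat \<Rightarrow> nat \<Rightarrow> bool" and w :: "nat \<Rightarrow> 'm"
    and Agr :: "'m \<Rightarrow> 'm \<Rightarrow> nat set" and m t K :: nat
  assumes fin: "finite H" and cardH: "card H \<le> m + t"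
    and sub1: "S1 \<subseteq> H" and sub2: "S2 \<subseteq> S1" and sub3: "S3 \<subseteq> S2"
    and refl: "\<forall>x\<in>H. L x x" and sym: "\<forall>x\<in>H. \<forall>y\<in>H. L x y \<longrightarrow> L y x"
    and agr: "\<forall>x\<in>H. \<forall>y\<in>H. \<forall>e\<in>H. w x \<noteq> w y \<longrightarrow> L x e \<longrightarrow> L y e \<longrightarrow> e \<in> Agr (w x) (w y)"
    and agrc: "\<forall>x\<in>H. \<forall>y\<in>H. w x \<noteq> w y \<longrightarrow> card (Agr (w x) (w y) \<inter> H) \<le> K"
    and d1: "\<forall>x\<in>S1. m \<le> card {j\<in>H. L x j}"
    and d2: "\<forall>x\<in>S2. m \<le> card {j\<in>S1. L x j}"
    and d3: "\<forall>x\<in>S3. m \<le> card {j\<in>S2. L x j}"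
    and mt: "t + 1 \<le> m" and K3: "3 * K \<le> t + 1"
begin

lemma inter_bound:
  assumes "x \<in> H" "y \<in> H" "w x \<noteq> w y"
  shows "card ({j\<in>H. L x j} \<inter> {j\<in>H. L y j}) \<le> K"
proof -
  have "{j\<in>H. L x j} \<inter> {j\<in>H. L y j} \<subseteq> Agr (w x) (w y) \<inter> H" using agr assms by blast
  then have "card ({j\<in>H. L x j} \<inter> {j\<in>H. L y j}) \<le> card (Agr (w x) (w y) \<inter> H)"
    by (intro card_mono) (use fin in auto)
  then show ?thesis using agrc assms by fastforce
qed

lemma no_three:
  assumes "x \<in> S1" "y \<in> S1" "z \<in> S1" "w x \<noteq> w y" "w x \<noteq> w z" "w y \<noteq> w z"
  shows False
proof -
  let ?N = "\<lambda>x. {j\<in>H. L x j}"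
  have H: "x \<in> H" "y \<in> H" "z \<in> H" using assms sub1 by auto
  have "card (?N x) + card (?N y) + card (?N z) \<le> card (?N x \<union> ?N y \<union> ?N z)
      + card (?N x \<inter> ?N y) + card (?N x \<inter> ?N z) + card (?N y \<inter> ?N z)"
    by (intro card3_bound) (use fin in auto)
  moreover have "card (?N x \<union> ?N y \<union> ?N z) \<le> card H" by (intro card_mono fin) auto
  moreover have "card (?N x \<inter> ?N y) \<le> K" "card (?N x \<inter> ?N z) \<le> K" "card (?N y \<inter> ?N z) \<le> K"
    using inter_bound H assms by auto
  moreover have "m \<le> card (?N x)" "m \<le> card (?N y)" "m \<le> card (?N z)" using d1 assms by auto
  ultimately show False using cardH mt K3 by linarith
qed

lemma half:
  assumes x: "x \<in> S3" and y: "y \<in> S3" and xy: "w x \<noteq> w y"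
    and cB: "card {j\<in>S1. w j = w y} < m"
  shows False
proof -
  let ?E = "Agr (w x) (w y) \<inter> H"
  have xH: "x \<in> H" and yH: "y \<in> H" and xS1: "x \<in> S1" and yS1: "y \<in> S1"
    using x y sub1 sub2 sub3 by auto
  have two: "w j = w x \<or> w j = w y" if "j \<in> S1" for j
    using no_three[OF xS1 yS1 that] xy by metis
  have S2B: "z \<in> ?E" if z: "z \<in> S2" "w z = w y" for z
  proof (rule ccontr)
    assume nz: "z \<notin> ?E"
    have zH: "z \<in> H" using z sub1 sub2 by auto
    have "{j\<in>S1. L z j} \<subseteq> {j\<in>S1. w j = w y}"
    proof safe
      fix j assume j: "j \<in> S1" "L z j"
      show "w j = w y"
      proof (rule ccontr)
        assume "w j \<noteq> w y"
        then have wj: "w j = w x" using two j by blast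
        have jH: "j \<in> H" using j sub1 by auto
        have "z \<in> Agr (w j) (w z)" using agr jH zH j refl sym wj xy z by metis
        then show False using nz zH wj z by auto
      qed
    qed
    moreover have "finite {j\<in>S1. w j = w y}"
      using finite_subset[OF sub1 fin] by simp
    ultimately have "card {j\<in>S1. L z j} \<le> card {j\<in>S1. w j = w y}"
      by (intro card_mono)
    then show False using d2 z cB by fastforce
  qed
  have "{j\<in>S2. L y j} \<subseteq> ?E"
  proof safe
    fix j assume j: "j \<in> S2" "L y j"
    have jH: "j \<in> H" using j sub1 sub2 by auto
    show "j \<in> Agr (w x) (w y)"
    proof (cases "w j = w y")
      case True then show ?thesis using S2B j by blast
    next
      case False
      then have wj: "w j = w x" using two j sub2 by blast
      show ?thesis using agr jH yH j refl wj xy by metis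
    qed
    show "j \<in> H" by fact
  qed
  then have "card {j\<in>S2. L y j} \<le> card ?E" by (intro card_mono) (use fin in auto)
  moreover have "card ?E \<le> K" using agrc xH yH xy by blast
  ultimately show False using d3 y mt K3 by fastforce
qed

theorem same:
  assumes x: "x \<in> S3" and y: "y \<in> S3"
  shows "w x = w y"
proof (rule ccontr)
  assume xy: "w x \<noteq> w y"
  have xS1: "x \<in> S1" and yS1: "y \<in> S1" using x y sub2 sub3 by auto
  have two: "w j = w x \<or> w j = w y" if "j \<in> S1" for j
    using no_three[OF xS1 yS1 that] xy by metis
  have "{j\<in>S1. w j = w x} \<union> {j\<in>S1. w j = w y} = S1" using two by blast
  moreover have "{j\<in>S1. w j = w x} \<inter> {j\<in>S1. w j = w y} = {}" using xy by auto
  moreover have fS1: "finite S1" using fin sub1 finite_subset by auto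
  ultimately have "card {j\<in>S1. w j = w x} + card {j\<in>S1. w j = w y} = card S1"
    by (metis (no_types, lifting) card_Un_disjoint finite_Un)
  moreover have "card S1 \<le> card H" using sub1 fin card_mono by auto
  ultimately have "card {j\<in>S1. w j = w x} < m \<or> card {j\<in>S1. w j = w y} < m"
    using cardH mt by linarith
  then show False
  proof
    assume "card {j\<in>S1. w j = w x} < m"
    then show False using half[OF y x] xy by metis
  next
    assume "card {j\<in>S1. w j = w y} < m"
    then show False using half[OF x y xy] by blast
  qed
qed

end


lemma p2_fst: "fst (phase2_step n t D advS (s, u, R)) i =
   (s i \<and> n - t \<le> card {j\<in>{1..n}. if s i then u i j \<and> R i j else u i j})"
  unfolding phase2_step_def Let_def prod.case fst_conv snd_conv by (rule refl)

lemma p2_u: "fst (snd (phase2_step n t D advS (s, u, R))) i j = (if s i then u i j \<and> R i j else u i j)"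
  unfolding phase2_step_def Let_def prod.case fst_conv snd_conv by (rule refl)

lemma p2_R: assumes "j \<notin> D" "j \<noteq> i" shows "snd (snd (phase2_step n t D advS (s, u, R))) i j =
   (if s j \<and> \<not> fst (phase2_step n t D advS (s, u, R)) j then False else R i j)"
  unfolding phase2_step_def Let_def prod.case fst_conv snd_conv
  using assms by (simp only: if_False if_True simp_thms split: if_split option.split) blast

lemma p2_Ri: "snd (snd (phase2_step n t D advS (s, u, R))) i i = fst (phase2_step n t D advS (s, u, R)) i"
  unfolding phase2_step_def Let_def prod.case fst_conv snd_conv by (simp only: if_True simp_thms)

lemma card_honest:
  fixes n :: nat
  assumes "D \<subseteq> {1..n}"
  shows "card {j\<in>{1..n}. P j} \<le> card {j\<in>{1..n} - D. P j} + card D"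
proof -
  have sub: "{j\<in>{1..n}. P j} \<subseteq> {j\<in>{1..n} - D. P j} \<union> D" by blast
  have fD: "finite D" using assms by (rule finite_subset) simp
  have "finite {j\<in>{1..n} - D. P j}" by (rule finite_subset[of _ "{1..n}"]) auto
  then have fU: "finite ({j\<in>{1..n} - D. P j} \<union> D)" using fD by (rule finite_UnI)
  have "card {j\<in>{1..n}. P j} \<le> card ({j\<in>{1..n} - D. P j} \<union> D)" by (rule card_mono[OF fU sub])
  also have "\<dots> \<le> card {j\<in>{1..n} - D. P j} + card D" by (rule card_Un_le)
  finally show ?thesis .
qed

lemma lkc:
  "l \<le> cool_k t * cool_c n t l"
proof -
  define X where "X = max (real l) ((real t / 5 + 1) * log 2 (real (n + 1))) / real (cool_k t)"
  have kpos: "real (cool_k t) > 0" by (simp add: cool_k_def)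
  have "real l / real (cool_k t) \<le> X" unfolding X_def using kpos by (intro divide_right_mono) auto
  also have "X \<le> real (cool_c n t l)" unfolding cool_c_def X_def[symmetric]
  proof -
    have "X \<le> of_int \<lceil>X\<rceil>" by (rule le_of_int_ceiling)
    also have "\<dots> \<le> real (nat \<lceil>X\<rceil>)" by simp
    finally show "X \<le> real (nat \<lceil>X\<rceil>)" .
  qed
  finally have "real l \<le> real (cool_k t) * real (cool_c n t l)" using kpos by (simp add: field_simps)
  then show ?thesis by (metis of_nat_le_iff of_nat_mult)
qed



theorem lemma3:
  fixes pt :: "nat \<Rightarrow> 'f::{field,finite}"
    and beta :: "bool list \<Rightarrow> 'f"
    and n t l :: nat
    and D :: "nat set"
    and win :: "nat \<Rightarrow> bool list"
    and adv1 :: "nat \<Rightarrow> nat \<Rightarrow> 'f \<times> 'f"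
    and advS1 :: "nat \<Rightarrow> nat \<Rightarrow> bool"
    and advS2 advS3 :: "nat \<Rightarrow> nat \<Rightarrow> bool option"
    and d :: bool
  assumes "n \<ge> 3 * t + 1"
    and "card (UNIV :: 'f set) = 2 ^ cool_c n t l"
    and "inj_on pt {1..n}"
    and "\<forall>i\<in>{1..n}. pt i \<noteq> 0"
    and "bij_betw beta {xs. length xs = cool_c n t l} UNIV"
    and "D \<subseteq> {1..n}"
    and "card D \<le> t"
    and "\<forall>i\<in>{1..n}. length (win i) = l"
  shows "\<exists>M. length M = l \<and>
           (\<forall>i\<in>{1..n} - D.
              cool_updated_msg n t (ycode pt beta (cool_k t) (cool_c n t l) l) D win
                 adv1 advS1 advS2 advS3 d i \<in> {Some M, None})"
proof -
  note nbig = assms(1) and inj = assms(3) and bij = assms(5) and Dsub = assms(6)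
    and cD = assms(7) and lw = assms(8)
  define k where "k = cool_k t"
  define c where "c = cool_c n t l"
  define Y where "Y = ycode pt beta k c l"
  define H where "H = {1..n} - D"
  define s1 where "s1 = succ1 n t Y D win adv1"
  define L where "L = link1 Y D win adv1"
  define R1 where "R1 = rec1 n t Y D win adv1 advS1"
  define st2 where "st2 = phase2_step n t D advS2 (s1, L, R1)"
  define s2 where "s2 = fst st2"
  define u2 where "u2 = fst (snd st2)"
  define R2 where "R2 = snd (snd st2)"
  define st3 where "st3 = phase2_step n t D advS3 (s2, u2, R2)"
  define s3 where "s3 = fst st3"
  define m where "m = n - t - card D"
  define K where "K = t div 5"
  define Agr where "Agr = (\<lambda>u v. {e\<in>{1..n}. Y u e = Y v e})"
  define S1 where "S1 = {i\<in>H. s1 i}"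
  define S2 where "S2 = {i\<in>H. s2 i}"
  define S3 where "S3 = {i\<in>H. s3 i}"
  have st2eq: "st2 = (s2, u2, R2)" unfolding s2_def u2_def R2_def by simp
  have upd: "cool_updated_msg n t (ycode pt beta (cool_k t) (cool_c n t l) l) D win
                 adv1 advS1 advS2 advS3 d i = (if d \<and> s3 i then Some (win i) else None)" for i
    unfolding cool_updated_msg_def Let_def state_phase1_def s3_def st3_def
      st2eq[symmetric] st2_def s1_def L_def R1_def Y_def k_def c_def by (rule refl)
  have fH: "finite H" unfolding H_def by simp
  have cardH: "card H \<le> m + t"
  proof -
    have "card H = n - card D" unfolding H_def using Dsub
      by (metis card_Diff_subset card_atLeastAtMost diff_Suc_1 finite_subset finite_atLeastAtMost)
    then show ?thesis unfolding m_def using nbig cD by linarith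
  qed
  have mt: "t + 1 \<le> m" unfolding m_def using nbig cD by linarith
  have K3: "3 * K \<le> t + 1" unfolding K_def by linarith
  have sub1: "S1 \<subseteq> H" unfolding S1_def by blast
  have sub2: "S2 \<subseteq> S1" unfolding S2_def S1_def s2_def st2_def p2_fst by blast
  have sub3: "S3 \<subseteq> S2" unfolding S3_def S2_def s3_def st3_def p2_fst by blast
  have reflL: "\<forall>x\<in>H. L x x" unfolding L_def link1_def by simp
  have HD: "x \<in> H \<Longrightarrow> x \<notin> D" for x unfolding H_def by blast
  have Lh: "x \<in> H \<Longrightarrow> y \<in> H \<Longrightarrow> L x y = (y = x \<or> (Y (win y) x = Y (win x) x \<and> Y (win y) y = Y (win x) y))" for x y
    unfolding L_def link1_def p1_pair_def using HD by auto
  have sym: "\<forall>x\<in>H. \<forall>y\<in>H. L x y \<longrightarrow> L y x" using Lh by metis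
  have agr: "\<forall>x\<in>H. \<forall>y\<in>H. \<forall>e\<in>H. win x \<noteq> win y \<longrightarrow> L x e \<longrightarrow> L y e \<longrightarrow> e \<in> Agr (win x) (win y)"
  proof (intro ballI impI)
    fix x y e assume h: "x \<in> H" "y \<in> H" "e \<in> H" "win x \<noteq> win y" "L x e" "L y e"
    have "Y (win e) e = Y (win x) e" using Lh[of x e] h by auto
    moreover have "Y (win e) e = Y (win y) e" using Lh[of y e] h by auto
    moreover have "e \<in> {1..n}" using h(3) unfolding H_def by blast
    ultimately show "e \<in> Agr (win x) (win y)" unfolding Agr_def by simp
  qed
  have kn: "k \<le> n" unfolding k_def cool_k_def using nbig by linarith
  have lk: "l \<le> k * c" unfolding k_def c_def by (rule lkc)
  have agrc: "\<forall>x\<in>H. \<forall>y\<in>H. win x \<noteq> win y \<longrightarrow> card (Agr (win x) (win y) \<inter> H) \<le> K"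
  proof (intro ballI impI)
    fix x y assume h: "x \<in> H" "y \<in> H" "win x \<noteq> win y"
    have lx: "length (win x) = l" and ly: "length (win y) = l" using h lw unfolding H_def by auto
    have "card (Agr (win x) (win y)) \<le> k - 1" unfolding Agr_def Y_def
      using ycode_agree[OF bij[folded c_def] lx ly lk inj kn h(3)] .
    moreover have "card (Agr (win x) (win y) \<inter> H) \<le> card (Agr (win x) (win y))"
      unfolding Agr_def by (intro card_mono) auto
    ultimately show "card (Agr (win x) (win y) \<inter> H) \<le> K" unfolding K_def k_def cool_k_def by simp
  qed
  have d1: "\<forall>x\<in>S1. m \<le> card {j\<in>H. L x j}"
  proof
    fix x assume x: "x \<in> S1"
    then have "n - t \<le> card {j\<in>{1..n}. L x j}" unfolding S1_def s1_def succ1_def L_def by blast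
    then show "m \<le> card {j\<in>H. L x j}" using card_honest[OF Dsub, of "L x"] unfolding m_def H_def by linarith
  qed
  have R1h: "x \<in> H \<Longrightarrow> j \<in> H \<Longrightarrow> R1 x j = s1 j" for x j
    unfolding R1_def rec1_def s1_def using HD by auto
  have d2: "\<forall>x\<in>S2. m \<le> card {j\<in>S1. L x j}"
  proof
    fix x assume x: "x \<in> S2"
    then have xs1: "s1 x" and xH: "x \<in> H" using sub2 unfolding S1_def by auto
    have "n - t \<le> card {j\<in>{1..n}. if s1 x then L x j \<and> R1 x j else L x j}"
      using x unfolding S2_def s2_def st2_def p2_fst by blast
    then have "n - t \<le> card {j\<in>{1..n}. L x j \<and> R1 x j}" using xs1 by simp
    then have "m \<le> card {j\<in>H. L x j \<and> R1 x j}"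
      using card_honest[OF Dsub, of "\<lambda>j. L x j \<and> R1 x j"] unfolding m_def H_def by linarith
    moreover have "{j\<in>H. L x j \<and> R1 x j} = {j\<in>S1. L x j}"
      unfolding S1_def using R1h[OF xH] by auto
    ultimately show "m \<le> card {j\<in>S1. L x j}" by simp
  qed
  have R2h: "x \<in> H \<Longrightarrow> j \<in> H \<Longrightarrow> R2 x j = s2 j" for x j
  proof -
    assume xH: "x \<in> H" and jH: "j \<in> H"
    show "R2 x j = s2 j"
    proof (cases "j = x")
      case True
      then show ?thesis unfolding R2_def s2_def st2_def by (simp only: p2_Ri)
    next
      case False
      have "R2 x j = (if s1 j \<and> \<not> s2 j then False else R1 x j)"
        unfolding R2_def s2_def st2_def using p2_R[OF HD[OF jH] False] .
      moreover have "s2 j \<longrightarrow> s1 j" unfolding s2_def st2_def p2_fst by blast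
      ultimately show ?thesis using R1h[OF xH jH] by auto
    qed
  qed
  have d3: "\<forall>x\<in>S3. m \<le> card {j\<in>S2. L x j}"
  proof
    fix x assume x: "x \<in> S3"
    then have xs2: "s2 x" and xs1: "s1 x" and xH: "x \<in> H" using sub2 sub3 unfolding S1_def S2_def by auto
    have "n - t \<le> card {j\<in>{1..n}. if s2 x then u2 x j \<and> R2 x j else u2 x j}"
      using x unfolding S3_def s3_def st3_def p2_fst by blast
    moreover have "u2 x j = (L x j \<and> R1 x j)" for j
      unfolding u2_def st2_def p2_u using xs1 by simp
    ultimately have "n - t \<le> card {j\<in>{1..n}. L x j \<and> R1 x j \<and> R2 x j}" using xs2 by simp
    then have "m \<le> card {j\<in>H. L x j \<and> R1 x j \<and> R2 x j}"
      using card_honest[OF Dsub, of "\<lambda>j. L x j \<and> R1 x j \<and> R2 x j"] unfolding m_def H_def by linarith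
    moreover have "{j\<in>H. L x j \<and> R1 x j \<and> R2 x j} = {j\<in>S2. L x j}"
      unfolding S2_def using R1h[OF xH] R2h[OF xH] sub2 unfolding S2_def S1_def by blast
    ultimately show "m \<le> card {j\<in>S2. L x j}" by simp
  qed
  interpret C: combi H S1 S2 S3 L win Agr m t K
    by (rule combi.intro[OF fH cardH sub1 sub2 sub3 reflL sym agr agrc d1 d2 d3 mt K3])
  show ?thesis
  proof (cases "\<exists>i0\<in>H. s3 i0")
    case True
    then obtain i0 where i0: "i0 \<in> H" "s3 i0" by blast
    have "length (win i0) = l" using i0 lw unfolding H_def by blast
    moreover have "\<forall>i\<in>H. (if d \<and> s3 i then Some (win i) else None) \<in> {Some (win i0), None}"
    proof
      fix i assume i: "i \<in> H"
      show "(if d \<and> s3 i then Some (win i) else None) \<in> {Some (win i0), None}"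
      proof (cases "s3 i")
        case True
        then have "win i = win i0" using C.same i i0 unfolding S3_def by blast
        then show ?thesis by simp
      qed simp
    qed
    ultimately show ?thesis unfolding upd H_def by blast
  next
    case False
    then have "\<forall>i\<in>H. (if d \<and> s3 i then Some (win i) else None) \<in> {Some (replicate l False), None}"
      by auto
    then show ?thesis unfolding upd H_def by (intro exI[of _ "replicate l False"]) simp
  qed
qed

end
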